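(* Let $b_0,b_1>0$, $d\ge1$, let $X=(\mathbb{R}/b_0\mathbb{Z})\times(\mathbb{R}/b_1\mathbb{Z})$ be a torus with coordinates $(t,x)$, let $\Delta t,\Delta x>0$, and let $L_d\colon(\mathbb{R}^d)^3\to\mathbb{R}$ be continuously differentiable. Consider the action, defined on continuously differentiable functions $u\colon X\to\mathbb{R}^d$, $$S(u)=\int_X L_d\big(u(t,x),u(t+\Delta t,x),u(t,x+\Delta x)\big)\,\mathrm{d}x\,\mathrm{d}t .$$ Then the stationary points $u\colon X\to\mathbb{R}^d$ of $S$ are exactly the solutions of the functional equation $$\frac{\partial}{\partial u}\Big(L_d\big(u(t,x),u(t+\Delta t,x),u(t,x+\Delta x)\big)+L_d\big(u(t-\Delta t,x),u(t,x),u(t-\Delta t,x+\Delta x)\big)+L_d\big(u(t,x-\Delta x),u(t+\Delta t,x-\Delta x),u(t,x)\big)\Big)=0$$ for all $(t,x)\in X$, where $\frac{\partial}{\partial u}$ denotes the sum of the partial derivatives of the three terms with respect to those arguments that are evaluated at $u(t,x)$.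
   Context: Arguments such as $t+\Delta t$ and $x+\Delta x$ are understood modulo the periods of the torus. A stationary point of $S$ is a function $u$ at which the derivative of $S$ vanishes for all variations $\delta u\colon X\to\mathbb{R}^d$ in the considered function space. *)

theory Defs
  imports "HOL-Analysis.Analysis"
begin

definition C1_map :: "('a::euclidean_space \<Rightarrow> 'b::real_normed_vector) \<Rightarrow> bool" where
  "C1_map f \<longleftrightarrow> (\<exists>f'. (\<forall>p. (f has_derivative blinfun_apply (f' p)) (at p))
                         \<and> continuous_on UNIV f')"

text \<open>Functions on the torus (R/b0 Z) x (R/b1 Z), represented as doubly periodic
  functions on R^2.\<close>
definition torus_periodic :: "real \<Rightarrow> real \<Rightarrow> (real \<times> real \<Rightarrow> 'b) \<Rightarrow> bool" where
  "torus_periodic b0 b1 u \<longleftrightarrow> (\<forall>t x. u (t + b0, x) = u (t, x) \<and> u (t, x + b1) = u (t, x))"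

text \<open>The discrete action S(u) = integral over the torus (a fundamental domain).\<close>
definition action ::
  "real \<Rightarrow> real \<Rightarrow> real \<Rightarrow> real \<Rightarrow> ('v \<times> 'v \<times> 'v \<Rightarrow> real) \<Rightarrow> (real \<times> real \<Rightarrow> 'v) \<Rightarrow> real" where
  "action b0 b1 dt dx L u =
     integral (cbox (0, 0) (b0, b1)) (\<lambda>(t, x). L (u (t, x), u (t + dt, x), u (t, x + dx)))"

definition stationary ::
  "real \<Rightarrow> real \<Rightarrow> real \<Rightarrow> real \<Rightarrow> ('v::euclidean_space \<times> 'v \<times> 'v \<Rightarrow> real) \<Rightarrow> (real \<times> real \<Rightarrow> 'v) \<Rightarrow> bool" where
  "stationary b0 b1 dt dx L u \<longleftrightarrow>
     (\<forall>v. C1_map v \<and> torus_periodic b0 b1 v \<longrightarrow>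
        ((\<lambda>\<epsilon>. action b0 b1 dt dx L (\<lambda>p. u p + \<epsilon> *\<^sub>R v p)) has_real_derivative 0) (at 0))"

end

theory Submission
  imports Defs
begin

lemma C1_cont: "C1_map f \<Longrightarrow> continuous_on UNIV f"
  unfolding C1_map_def by (meson continuous_at_imp_continuous_on has_derivative_continuous)

lemma per_nat: assumes "\<And>t. g (t + b) = g t" shows "g (t + real n * b) = g t"
proof (induction n)
  case (Suc n)
  have "g (t + real (Suc n) * b) = g ((t + real n * b) + b)" by (simp add: algebra_simps)
  then show ?case using assms Suc by simp
qed simp

lemma per_int: assumes "\<And>t. g (t + b) = g t" shows "g (t + real_of_int j * b) = g t"
proof (cases "j \<ge> 0")
  case True
  then obtain n where "j = int n" by (metis nonneg_eq_int)
  then show ?thesis using per_nat[of g b t n, OF assms] by simp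
next
  case False
  define n where "n = nat (-j)"
  have n: "j = - int n" using False n_def by simp
  have "g ((t - real n * b) + real n * b) = g (t - real n * b)" using per_nat[of g b, OF assms] by blast
  then show ?thesis using n by simp
qed

lemma per_shift1:
  fixes g :: "real \<Rightarrow> real"
  assumes cont: "continuous_on UNIV g" and per: "\<And>t. g (t + b) = g t" and b: "b > 0" and a: "a \<ge> 0"
  shows "integral {0..b} (\<lambda>t. g (t + a)) = integral {0..b} g"
proof -
  have 1: "integral {0..b} (\<lambda>t. g (t + a)) = integral {a..a+b} g"
    using integral_shift_real_ivl[where a=a and c=a and b="a+b" and f=g] by simp
  define G where "G y = integral {0..y} g" for y
  have int: "g integrable_on {x..y}" for x y
    by (rule integrable_continuous_real) (rule continuous_on_subset[OF cont], auto)
  have comb: "integral {y..y+b} g = G (y+b) - G y" if "y \<ge> 0" for y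
    using Henstock_Kurzweil_Integration.integral_combine[where f=g and a=0 and c=y and b="y+b", OF that _ int] b unfolding G_def by simp
  have dG: "(G has_real_derivative g y) (at y within {0..a+b})" if "y \<in> {0..a+b}" for y
    unfolding G_def by (rule integral_has_real_derivative[OF continuous_on_subset[OF cont] that]) auto
  have d: "((\<lambda>y. G (y+b) - G y) has_real_derivative 0) (at y within {0..a})" if y: "y \<in> {0..a}" for y
  proof -
    have D1: "((\<lambda>y. y + b) has_real_derivative 1) (at y within {0..a})"
      by (auto intro!: derivative_eq_intros)
    have D2: "(G has_real_derivative g (y+b)) (at (y+b) within ((\<lambda>y. y + b) ` {0..a}))"
      by (rule DERIV_subset[OF dG]) (use y b in auto)
    have A: "((G \<circ> (\<lambda>y. y + b)) has_real_derivative g (y+b) * 1) (at y within {0..a})"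
      by (rule DERIV_image_chain[where g="\<lambda>y. y + b"]) (use D1 D2 in auto)
    have B: "(G has_real_derivative g y) (at y within {0..a})"
      by (rule DERIV_subset[OF dG]) (use y b in auto)
    have "((\<lambda>y. G (y+b) - G y) has_real_derivative g (y+b) * 1 - g y) (at y within {0..a})"
      using DERIV_diff[OF A B] by (simp add: o_def)
    then show ?thesis using per by simp
  qed
  obtain c where c: "\<And>y. y \<in> {0..a} \<Longrightarrow> G (y+b) - G y = c"
    using has_field_derivative_zero_constant[of "{0..a}", OF _ d] by auto
  have "integral {a..a+b} g = G (a+b) - G a" using comb a by (simp add: add.commute)
  also have "\<dots> = c" using c a by simp
  also have "\<dots> = G (0+b) - G 0" using c[of 0] a by simp
  also have "\<dots> = integral {0..b} g" unfolding G_def by simp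
  finally show ?thesis using 1 by simp
qed

lemma per_shift2:
  fixes g :: "real \<times> real \<Rightarrow> real"
  assumes cont: "continuous_on UNIV g"
    and p0: "\<And>t x. g (t + b0, x) = g (t, x)" and p1: "\<And>t x. g (t, x + b1) = g (t, x)"
    and b0: "b0 > 0" and b1: "b1 > 0" and a: "a \<ge> 0"
  shows "integral (cbox (0,0) (b0,b1)) (\<lambda>p. g (fst p + a, snd p)) = integral (cbox (0,0) (b0,b1)) g"
    and "integral (cbox (0,0) (b0,b1)) (\<lambda>p. g (fst p, snd p + a)) = integral (cbox (0,0) (b0,b1)) g"
proof -
  have c2: "continuous_on S (\<lambda>(t, x). g (t + c, x + d))" for S c d
    by (rule continuous_on_subset[of UNIV], unfold split_def)
       (intro continuous_on_compose2[OF cont] continuous_intros, auto)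
  have c3: "continuous_on S (\<lambda>(x, t). g (t + c, x + d))" for S c d
    by (rule continuous_on_subset[of UNIV], unfold split_def)
       (intro continuous_on_compose2[OF cont] continuous_intros, auto)
  have eqg: "g = (\<lambda>(t, x). g (t + 0, x + 0))" by auto
  have Fub: "integral (cbox (0,0) (b0,b1)) (\<lambda>(t, x). g (t + c, x + d))
      = integral {0..b0} (\<lambda>t. integral {0..b1} (\<lambda>x. g (t + c, x + d)))" for c d
    using integral_prod_continuous[OF c2[of "cbox (0,0) (b0,b1)" c d]] by simp
  have Fub2: "integral (cbox (0,0) (b0,b1)) (\<lambda>(t, x). g (t + c, x + d))
      = integral {0..b1} (\<lambda>x. integral {0..b0} (\<lambda>t. g (t + c, x + d)))" for c d
  proof -
    have "integral (cbox (0,0) (b0,b1)) (\<lambda>(t, x). g (t + c, x + d))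
        = integral (cbox (0,0) (b1,b0)) (\<lambda>(x, t). g (t + c, x + d))"
      using integral_swap_2dim[where f="\<lambda>t x. g (t + c, x + d)", OF c2] by simp
    also have "\<dots> = integral {0..b1} (\<lambda>x. integral {0..b0} (\<lambda>t. g (t + c, x + d)))"
      using integral_prod_continuous[where f="\<lambda>(x, t). g (t + c, x + d)", OF c3] by simp
    finally show ?thesis .
  qed
  have ct: "continuous_on UNIV (\<lambda>t. g (t, x))" for x
    by (intro continuous_on_compose2[OF cont] continuous_intros) auto
  have cx: "continuous_on UNIV (\<lambda>x. g (t, x))" for t
    by (intro continuous_on_compose2[OF cont] continuous_intros) auto
  have "integral (cbox (0,0) (b0,b1)) (\<lambda>p. g (fst p + a, snd p))
      = integral (cbox (0,0) (b0,b1)) (\<lambda>(t, x). g (t + a, x + 0))" by (simp add: split_def)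
  also have "\<dots> = integral {0..b1} (\<lambda>x. integral {0..b0} (\<lambda>t. g (t + a, x)))" using Fub2[of a 0] by simp
  also have "\<dots> = integral {0..b1} (\<lambda>x. integral {0..b0} (\<lambda>t. g (t + 0, x + 0)))"
    using per_shift1[OF ct p0 b0 a] by simp
  also have "\<dots> = integral (cbox (0,0) (b0,b1)) g" using Fub2[of 0 0] eqg by simp
  finally show "integral (cbox (0,0) (b0,b1)) (\<lambda>p. g (fst p + a, snd p)) = integral (cbox (0,0) (b0,b1)) g" .
  have "integral (cbox (0,0) (b0,b1)) (\<lambda>p. g (fst p, snd p + a))
      = integral (cbox (0,0) (b0,b1)) (\<lambda>(t, x). g (t + 0, x + a))" by (simp add: split_def)
  also have "\<dots> = integral {0..b0} (\<lambda>t. integral {0..b1} (\<lambda>x. g (t, x + a)))" using Fub[of 0 a] by simp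
  also have "\<dots> = integral {0..b0} (\<lambda>t. integral {0..b1} (\<lambda>x. g (t + 0, x + 0)))"
    using per_shift1[OF cx p1 b1 a] by simp
  also have "\<dots> = integral (cbox (0,0) (b0,b1)) g" using Fub[of 0 0] eqg by simp
  finally show "integral (cbox (0,0) (b0,b1)) (\<lambda>p. g (fst p, snd p + a)) = integral (cbox (0,0) (b0,b1)) g" .
qed

definition wq :: "real \<Rightarrow> real" where "wq y = (max 0 y)^2"

lemma DERIV_wq: "(wq has_real_derivative 2 * max 0 y) (at y)"
proof (cases "y = 0")
  case True
  have eq: "(\<lambda>h. (wq (0 + h) - wq 0) / h) = (\<lambda>h. max 0 h)"
    by (rule ext) (auto simp: wq_def power2_eq_square max_def)
  have "((\<lambda>h. max 0 h) \<longlongrightarrow> max 0 (0::real)) (at 0)"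
    by (intro tendsto_intros)
  hence "((\<lambda>h. (wq (0 + h) - wq 0) / h) \<longlongrightarrow> 0) (at 0)" by (subst eq) simp
  then show ?thesis using True unfolding DERIV_def by simp
next
  case False
  show ?thesis
  proof (cases "y > 0")
    case True
    have "((\<lambda>z. z^2) has_real_derivative 2 * max 0 y) (at y)"
      using True by (auto intro!: derivative_eq_intros)
    from has_field_derivative_transform_within_open[OF this, of "{0<..}" wq]
    show ?thesis using True by (auto simp: wq_def)
  next
    case F: False
    have "((\<lambda>z. 0) has_real_derivative 2 * max 0 y) (at y)"
      using F by (auto intro!: derivative_eq_intros)
    from has_field_derivative_transform_within_open[OF this, of "{..<0}" wq]
    show ?thesis using F False by (auto simp: wq_def)
  qed
qed

definition bump :: "real \<Rightarrow> real \<Rightarrow> real \<Rightarrow> real \<Rightarrow> real" where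
  "bump b s0 k s = wq (cos (2*pi/b * (s - s0)) - k)"
definition bump' :: "real \<Rightarrow> real \<Rightarrow> real \<Rightarrow> real \<Rightarrow> real" where
  "bump' b s0 k s = 2 * max 0 (cos (2*pi/b * (s - s0)) - k) * (- sin (2*pi/b * (s - s0)) * (2*pi/b))"

lemma DERIV_bump: "(bump b s0 k has_real_derivative bump' b s0 k s) (at s)"
proof -
  have gen: "((\<lambda>s. cos (c * (s - s0)) - k) has_real_derivative (- sin (c * (s - s0)) * c)) (at s)" for c
    by (auto intro!: derivative_eq_intros)
  note gen[of "2*pi/b"]
  from DERIV_chain2[OF DERIV_wq this] show ?thesis
    unfolding bump_def[abs_def] bump'_def by simp
qed

lemma cont_bump: "continuous_on UNIV (bump b s0 k)"
  unfolding bump_def[abs_def] wq_def by (intro continuous_intros)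

lemma cont_bump': "continuous_on UNIV (bump' b s0 k)"
  unfolding bump'_def[abs_def] by (intro continuous_intros)

lemma bump_nonneg: "bump b s0 k s \<ge> 0"
  unfolding bump_def wq_def by simp

lemma bump_per: assumes "b > 0" shows "bump b s0 k (s + b) = bump b s0 k s"
proof -
  have "2*pi/b * (s + b - s0) = 2*pi/b * (s - s0) + 2*pi" using assms by (simp add: field_simps)
  then show ?thesis unfolding bump_def by simp
qed

lemma cos_add_int: "cos ((x::real) + 2*pi * of_int (j::int)) = cos x"
  by (simp add: cos_add)

lemma bump_center: assumes "b > 0" "k < 1" shows "bump b s0 k (s0 + of_int j * b) > 0"
proof -
  have "2*pi/b * (s0 + of_int j * b - s0) = 2*pi * of_int j" using assms by simp
  moreover have "cos (2*pi * of_int j) = 1" by (rule cos_int_2pin)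
  ultimately have "cos (2*pi/b * (s0 + of_int j * b - s0)) = 1" by simp
  then show ?thesis unfolding bump_def wq_def using assms by simp
qed

lemma bump_supp:
  assumes b: "b > 0" and th: "0 < \<theta>" "\<theta> \<le> pi" and pos: "bump b s0 (cos \<theta>) s > 0"
  shows "\<exists>j::int. \<bar>s - of_int j * b - s0\<bar> < \<theta> * b / (2*pi)"
proof -
  define j where "j = \<lfloor>(s - s0)/b + 1/2\<rfloor>"
  define z where "z = (s - s0)/b - of_int j"
  have z1: "z \<ge> -1/2" "z < 1/2" unfolding z_def j_def
    using floor_correct[of "(s - s0)/b + 1/2"] by linarith+
  have "cos (2*pi/b * (s - s0)) > cos \<theta>"
    using pos unfolding bump_def wq_def by (auto simp: max_def split: if_splits)
  moreover have "2*pi/b * (s - s0) = 2*pi*z + 2*pi * of_int j" unfolding z_def using b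
    by (simp add: field_simps)
  ultimately have "cos (2*pi*z) > cos \<theta>" by (simp add: cos_add_int)
  hence c: "cos (2*pi*\<bar>z\<bar>) > cos \<theta>" by (cases "z \<ge> 0") (auto simp: abs_if)
  have "2*pi*\<bar>z\<bar> \<le> pi" using z1 by (auto simp: abs_if)
  hence "2*pi*\<bar>z\<bar> < \<theta>" using cos_mono_less_eq[of \<theta> "2*pi*\<bar>z\<bar>"] c th by auto
  hence "\<bar>z\<bar> * b < \<theta> * b / (2*pi)" using b by (simp add: field_simps)
  moreover have "\<bar>s - of_int j * b - s0\<bar> = \<bar>z\<bar> * b" unfolding z_def using b
    by (simp add: field_simps abs_mult[symmetric])
  ultimately show ?thesis by metis
qed

lemma C1_scal:
  fixes \<phi> :: "real \<times> real \<Rightarrow> real" and h :: "'b::real_normed_vector"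
  assumes d: "\<And>p. (\<phi> has_derivative (\<lambda>k. fst k * a p + snd k * c p)) (at p)"
    and ca: "continuous_on UNIV a" and cc: "continuous_on UNIV c"
  shows "C1_map (\<lambda>p. \<phi> p *\<^sub>R h)"
proof -
  have bl1: "bounded_linear (\<lambda>k::real\<times>real. fst k *\<^sub>R h)"
    by (rule bounded_linear_compose[OF bounded_linear_scaleR_left bounded_linear_fst])
  have bl2: "bounded_linear (\<lambda>k::real\<times>real. snd k *\<^sub>R h)"
    by (rule bounded_linear_compose[OF bounded_linear_scaleR_left bounded_linear_snd])
  define B1 where "B1 = Blinfun (\<lambda>k::real\<times>real. fst k *\<^sub>R h)"
  define B2 where "B2 = Blinfun (\<lambda>k::real\<times>real. snd k *\<^sub>R h)"
  define f' where "f' p = a p *\<^sub>R B1 + c p *\<^sub>R B2" for p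
  have "((\<lambda>p. \<phi> p *\<^sub>R h) has_derivative blinfun_apply (f' p)) (at p)" for p
  proof -
    have "((\<lambda>p. \<phi> p *\<^sub>R h) has_derivative (\<lambda>k. (fst k * a p + snd k * c p) *\<^sub>R h)) (at p)"
      by (auto intro!: derivative_eq_intros d)
    moreover have "(\<lambda>k. (fst k * a p + snd k * c p) *\<^sub>R h) = blinfun_apply (f' p)"
      by (rule ext) (simp add: f'_def B1_def B2_def bounded_linear_Blinfun_apply[OF bl1]
          bounded_linear_Blinfun_apply[OF bl2] scaleR_add_left plus_blinfun.rep_eq scaleR_blinfun.rep_eq mult.commute)
    ultimately show ?thesis by simp
  qed
  moreover have "continuous_on UNIV f'"
    unfolding f'_def[abs_def] by (intro continuous_intros ca cc)
  ultimately show ?thesis unfolding C1_map_def by blast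
qed

lemma prod_deriv:
  fixes f g :: "real \<Rightarrow> real"
  assumes "\<And>s. (f has_real_derivative f' s) (at s)" "\<And>s. (g has_real_derivative g' s) (at s)"
  shows "((\<lambda>p. f (fst p) * g (snd p)) has_derivative
     (\<lambda>k. fst k * (f' (fst p) * g (snd p)) + snd k * (f (fst p) * g' (snd p)))) (at p)"
proof -
  have A: "((\<lambda>p. f (fst p)) has_derivative (\<lambda>k. fst k * f' (fst p))) (at p)"
    by (rule DERIV_compose_FDERIV[OF assms(1) has_derivative_fst[OF has_derivative_ident]])
  have B: "((\<lambda>p. g (snd p)) has_derivative (\<lambda>k. snd k * g' (snd p))) (at p)"
    by (rule DERIV_compose_FDERIV[OF assms(2) has_derivative_snd[OF has_derivative_ident]])
  show ?thesis using has_derivative_mult[OF A B]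
    by (rule has_derivative_eq_rhs) (auto simp: algebra_simps)
qed

theorem lemma1:
  fixes b0 b1 dt dx :: real
    and L :: "(real^'d) \<times> (real^'d) \<times> (real^'d) \<Rightarrow> real"
    and L' :: "(real^'d) \<times> (real^'d) \<times> (real^'d) \<Rightarrow> ((real^'d) \<times> (real^'d) \<times> (real^'d)) \<Rightarrow>\<^sub>L real"
    and u :: "real \<times> real \<Rightarrow> real^'d"
  assumes "b0 > 0" and "b1 > 0" and "dt > 0" and "dx > 0"
    and "\<And>p. (L has_derivative blinfun_apply (L' p)) (at p)"
    and "continuous_on UNIV L'"
    and "C1_map u" and "torus_periodic b0 b1 u"
  shows "stationary b0 b1 dt dx L u \<longleftrightarrow>
    (\<forall>t x. \<forall>h :: real^'d.
        L' (u (t, x), u (t + dt, x), u (t, x + dx)) (h, 0, 0)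
      + L' (u (t - dt, x), u (t, x), u (t - dt, x + dx)) (0, h, 0)
      + L' (u (t, x - dx), u (t + dt, x - dx), u (t, x)) (0, 0, h) = 0)"
proof -
  note b0 = assms(1) and b1 = assms(2) and dt = assms(3) and dx = assms(4)
  note dL = assms(5) and cL = assms(6)
  have cu: "continuous_on UNIV u" by (rule C1_cont[OF assms(7)])
  have up0: "u (t + b0, x) = u (t, x)" and up1: "u (t, x + b1) = u (t, x)" for t x
    using assms(8) unfolding torus_periodic_def by auto
  define B where "B = cbox (0::real,0::real) (b0,b1)"
  define U where "U p = (u p, u (fst p + dt, snd p), u (fst p, snd p + dx))" for p
  define V where "V v p = (v p, v (fst p + dt, snd p), v (fst p, snd p + dx))"
    for v :: "real \<times> real \<Rightarrow> real^'d" and p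
  define E where "E p h = L' (U p) (h,0,0) + L' (U (fst p - dt, snd p)) (0,h,0)
      + L' (U (fst p, snd p - dx)) (0,0,h)" for p h
  have cshift: "continuous_on UNIV (\<lambda>p. g (fst p + c, snd p + d))" if "continuous_on UNIV g" for g :: "real \<times> real \<Rightarrow> 'z::topological_space" and c d
    by (intro continuous_on_compose2[OF that] continuous_intros) auto
  have cU: "continuous_on UNIV U"
  proof -
    have "continuous_on UNIV (\<lambda>p. u (fst p + 0, snd p + 0))" by (rule cshift[OF cu])
    moreover have "continuous_on UNIV (\<lambda>p. u (fst p + dt, snd p + 0))" by (rule cshift[OF cu])
    moreover have "continuous_on UNIV (\<lambda>p. u (fst p + 0, snd p + dx))" by (rule cshift[OF cu])
    ultimately show ?thesis unfolding U_def[abs_def] by (auto intro!: continuous_on_Pair)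
  qed
  have cV: "continuous_on UNIV (V v)" if "continuous_on UNIV v" for v
  proof -
    have "continuous_on UNIV (\<lambda>p. v (fst p + 0, snd p + 0))" by (rule cshift[OF that])
    moreover have "continuous_on UNIV (\<lambda>p. v (fst p + dt, snd p + 0))" by (rule cshift[OF that])
    moreover have "continuous_on UNIV (\<lambda>p. v (fst p + 0, snd p + dx))" by (rule cshift[OF that])
    ultimately show ?thesis unfolding V_def[abs_def] by (auto intro!: continuous_on_Pair)
  qed
  have cL'U: "continuous_on UNIV (\<lambda>p. L' (U (fst p + c, snd p + d)))" for c d
    by (rule continuous_on_compose2[OF cL cshift[OF cU]]) auto
  have cE: "continuous_on UNIV (\<lambda>p. E p (g p))" if "continuous_on UNIV g" for g
  proof -
    have "continuous_on UNIV (\<lambda>p. L' (U (fst p + 0, snd p + 0)) (g p, 0, 0))"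
      by (intro blinfun.continuous_on cL'U continuous_intros that)
    moreover have "continuous_on UNIV (\<lambda>p. L' (U (fst p + - dt, snd p + 0)) (0, g p, 0))"
      by (intro blinfun.continuous_on cL'U continuous_intros that)
    moreover have "continuous_on UNIV (\<lambda>p. L' (U (fst p + 0, snd p + - dx)) (0, 0, g p))"
      by (intro blinfun.continuous_on cL'U continuous_intros that)
    ultimately show ?thesis unfolding E_def by (auto intro!: continuous_intros)
  qed

  have cLc: "continuous_on UNIV L"
    by (meson continuous_at_imp_continuous_on has_derivative_continuous dL)
  have Uper: "U (t + b0, x) = U (t, x)" "U (t, x + b1) = U (t, x)" for t x
    unfolding U_def by (simp_all, metis add.commute add.left_commute up0, metis add.commute add.left_commute up1)
  have Eper0: "E (t + b0, x) h = E (t, x) h" for t x h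
  proof -
    have "U (t + b0 - dt, x) = U (t - dt, x)" using Uper(1)[of "t - dt" x] by (simp add: algebra_simps)
    then show ?thesis unfolding E_def using Uper(1)[of t "x - dx"] Uper(1)[of t x] by simp
  qed
  have Eper1: "E (t, x + b1) h = E (t, x) h" for t x h
  proof -
    have "U (t, x + b1 - dx) = U (t, x - dx)" using Uper(2)[of t "x - dx"] by (simp add: algebra_simps)
    then show ?thesis unfolding E_def using Uper(2)[of "t - dt" x] Uper(2)[of t x] by simp
  qed
  have Elin: "E p (c *\<^sub>R h) = c * E p h" for p c h
  proof -
    have "(c *\<^sub>R h, 0::real^'d, 0::real^'d) = c *\<^sub>R (h, 0, 0)" "(0::real^'d, c *\<^sub>R h, 0::real^'d) = c *\<^sub>R (0, h, 0)"
      "(0::real^'d, 0::real^'d, c *\<^sub>R h) = c *\<^sub>R (0, 0, h)" by simp_all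
    then show ?thesis unfolding E_def by (simp only: blinfun.scaleR_right) (simp add: algebra_simps)
  qed
  have act: "action b0 b1 dt dx L (\<lambda>p. u p + \<epsilon> *\<^sub>R v p) = integral B (\<lambda>p. L (U p + \<epsilon> *\<^sub>R V v p))" for v \<epsilon>
    unfolding action_def B_def by (rule arg_cong[where f="integral _"]) (auto simp: U_def V_def fun_eq_iff)
  have deriv: "((\<lambda>\<epsilon>. action b0 b1 dt dx L (\<lambda>p. u p + \<epsilon> *\<^sub>R v p)) has_real_derivative
      integral B (\<lambda>p. L' (U p) (V v p))) (at 0)" if cv: "continuous_on UNIV v" for v
  proof -
    note cVv = cV[OF cv]
    have "((\<lambda>\<epsilon>. integral B (\<lambda>p. L (U p + \<epsilon> *\<^sub>R V v p))) has_field_derivative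
        integral B (\<lambda>p. L' (U p + 0 *\<^sub>R V v p) (V v p))) (at 0 within UNIV)"
      unfolding B_def
    proof (rule leibniz_rule_field_derivative[where fx="\<lambda>\<epsilon> p. L' (U p + \<epsilon> *\<^sub>R V v p) (V v p)"
        and f="\<lambda>\<epsilon> p. L (U p + \<epsilon> *\<^sub>R V v p)" and a="(0,0)" and b="(b0,b1)"])
      fix \<epsilon> :: real and p :: "real \<times> real"
      have 1: "((\<lambda>\<epsilon>. U p + \<epsilon> *\<^sub>R V v p) has_derivative (\<lambda>h. h *\<^sub>R V v p)) (at \<epsilon>)"
        by (auto intro!: derivative_eq_intros)
      have "((\<lambda>\<epsilon>. L (U p + \<epsilon> *\<^sub>R V v p)) has_derivative (\<lambda>h. L' (U p + \<epsilon> *\<^sub>R V v p) (h *\<^sub>R V v p))) (at \<epsilon>)"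
        by (rule has_derivative_compose[OF 1 dL])
      moreover have "(\<lambda>h. L' (U p + \<epsilon> *\<^sub>R V v p) (h *\<^sub>R V v p)) = (*) (L' (U p + \<epsilon> *\<^sub>R V v p) (V v p))"
        by (rule ext) (simp add: blinfun.scaleR_right)
      ultimately show "((\<lambda>\<epsilon>. L (U p + \<epsilon> *\<^sub>R V v p)) has_field_derivative L' (U p + \<epsilon> *\<^sub>R V v p) (V v p)) (at \<epsilon> within UNIV)"
        by (simp add: has_field_derivative_def)
    next
      fix \<epsilon> :: real
      have "continuous_on UNIV (\<lambda>p. U p + \<epsilon> *\<^sub>R V v p)"
        by (intro continuous_intros cU cVv)
      from continuous_on_compose2[OF cLc this]
      have cf: "continuous_on UNIV (\<lambda>p. L (U p + \<epsilon> *\<^sub>R V v p))" by simp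
      show "(\<lambda>p. L (U p + \<epsilon> *\<^sub>R V v p)) integrable_on cbox (0, 0) (b0, b1)"
        by (rule integrable_continuous, rule continuous_on_subset[OF cf]) auto
    next
      have cUs: "continuous_on UNIV (\<lambda>q::real\<times>(real\<times>real). U (snd q))"
        using continuous_on_compose2[OF cU continuous_on_snd[OF continuous_on_id]] by simp
      have cVs: "continuous_on UNIV (\<lambda>q::real\<times>(real\<times>real). V v (snd q))"
        using continuous_on_compose2[OF cVv continuous_on_snd[OF continuous_on_id]] by simp
      have "continuous_on UNIV (\<lambda>q::real\<times>(real\<times>real). U (snd q) + fst q *\<^sub>R V v (snd q))"
        by (intro continuous_intros cUs cVs)
      from continuous_on_compose2[OF cL this]
      have "continuous_on UNIV (\<lambda>q::real\<times>(real\<times>real). L' (U (snd q) + fst q *\<^sub>R V v (snd q)))" by simp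
      hence cf: "continuous_on UNIV (\<lambda>q::real\<times>(real\<times>real). L' (U (snd q) + fst q *\<^sub>R V v (snd q)) (V v (snd q)))"
        by (intro blinfun.continuous_on cVs)
      show "continuous_on (UNIV \<times> cbox (0, 0) (b0, b1)) (\<lambda>(\<epsilon>, p). L' (U p + \<epsilon> *\<^sub>R V v p) (V v p))"
        unfolding split_def by (rule continuous_on_subset[OF cf]) simp
    qed auto
    then show ?thesis by (simp add: act)
  qed
  have splitI: "integral B (\<lambda>p. L' (U p) (V v p)) = integral B (\<lambda>p. E p (v p))"
    if cv: "continuous_on UNIV v" and vp0: "\<And>t x. v (t + b0, x) = v (t, x)"
      and vp1: "\<And>t x. v (t, x + b1) = v (t, x)" for v
  proof -
    define g1 where "g1 p = L' (U p) (v p, 0, 0)" for p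
    define g2 where "g2 p = L' (U (fst p - dt, snd p)) (0, v p, 0)" for p
    define g3 where "g3 p = L' (U (fst p, snd p - dx)) (0, 0, v p)" for p
    have eq: "L' (U p) (V v p) = g1 p + g2 (fst p + dt, snd p) + g3 (fst p, snd p + dx)" for p
    proof -
      have "L' (U p) (V v p) = L' (U p) ((v p, 0, 0) + (0, v (fst p + dt, snd p), 0) + (0, 0, v (fst p, snd p + dx)))"
        by (simp add: V_def)
      also have "\<dots> = L' (U p) (v p, 0, 0) + L' (U p) (0, v (fst p + dt, snd p), 0) + L' (U p) (0, 0, v (fst p, snd p + dx))"
        by (simp only: blinfun.add_right)
      finally show ?thesis by (simp add: g1_def g2_def g3_def)
    qed
    have c1: "continuous_on UNIV g1" unfolding g1_def
      using cL'U[of 0 0] by (intro blinfun.continuous_on continuous_intros cv) auto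
    have c2: "continuous_on UNIV g2" unfolding g2_def
      using cL'U[of "-dt" 0] by (intro blinfun.continuous_on continuous_intros cv) auto
    have c3: "continuous_on UNIV g3" unfolding g3_def
      using cL'U[of 0 "-dx"] by (intro blinfun.continuous_on continuous_intros cv) auto
    have c2s: "continuous_on UNIV (\<lambda>p. g2 (fst p + dt, snd p))" using cshift[OF c2, of dt 0] by simp
    have c3s: "continuous_on UNIV (\<lambda>p. g3 (fst p, snd p + dx))" using cshift[OF c3, of 0 dx] by simp
    have int: "f integrable_on B" if "continuous_on UNIV f" for f :: "real\<times>real \<Rightarrow> real"
      unfolding B_def by (intro integrable_continuous continuous_on_subset[OF that]) auto
    have g2p: "g2 (t + b0, x) = g2 (t, x)" "g2 (t, x + b1) = g2 (t, x)" for t x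
    proof -
      have "U (t + b0 - dt, x) = U (t - dt, x)" using Uper(1)[of "t - dt" x] by (simp add: algebra_simps)
      then show "g2 (t + b0, x) = g2 (t, x)" unfolding g2_def using vp0 by simp
      show "g2 (t, x + b1) = g2 (t, x)" unfolding g2_def using vp1 Uper(2)[of "t - dt" x] by simp
    qed
    have g3p: "g3 (t + b0, x) = g3 (t, x)" "g3 (t, x + b1) = g3 (t, x)" for t x
    proof -
      have "U (t, x + b1 - dx) = U (t, x - dx)" using Uper(2)[of t "x - dx"] by (simp add: algebra_simps)
      then show "g3 (t, x + b1) = g3 (t, x)" unfolding g3_def using vp1 by simp
      show "g3 (t + b0, x) = g3 (t, x)" unfolding g3_def using vp0 Uper(1)[of t "x - dx"] by simp
    qed
    have "integral B (\<lambda>p. L' (U p) (V v p))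
        = integral B g1 + integral B (\<lambda>p. g2 (fst p + dt, snd p)) + integral B (\<lambda>p. g3 (fst p, snd p + dx))"
      unfolding eq by (subst integral_add, intro integrable_add int c1 c2s c3s continuous_intros,
          rule int[OF c3s], subst integral_add, (intro int c1 c2s)+, simp)
    also have "\<dots> = integral B g1 + integral B g2 + integral B g3"
      unfolding B_def using per_shift2(1)[OF c2 g2p b0 b1, of dt] per_shift2(2)[OF c3 g3p b0 b1, of dx] dt dx
      by simp
    also have "\<dots> = integral B (\<lambda>p. g1 p + g2 p + g3 p)"
      by (subst integral_add, intro integrable_add int c1 c2 c3, rule int[OF c3], subst integral_add, (intro int c1 c2)+, simp)
    also have "\<dots> = integral B (\<lambda>p. E p (v p))"
      by (simp add: E_def g1_def g2_def g3_def)
    finally show ?thesis .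
  qed
  have stat_iff: "stationary b0 b1 dt dx L u \<longleftrightarrow>
      (\<forall>v. C1_map v \<and> torus_periodic b0 b1 v \<longrightarrow> integral B (\<lambda>p. E p (v p)) = 0)"
  proof -
    have "((\<lambda>\<epsilon>. action b0 b1 dt dx L (\<lambda>p. u p + \<epsilon> *\<^sub>R v p)) has_real_derivative 0) (at 0)
        \<longleftrightarrow> integral B (\<lambda>p. E p (v p)) = 0" if v1: "C1_map v" and v2: "torus_periodic b0 b1 v" for v
    proof -
      have cv: "continuous_on UNIV v" by (rule C1_cont[OF v1])
      have vp0: "v (t + b0, x) = v (t, x)" and vp1: "v (t, x + b1) = v (t, x)" for t x
        using v2 unfolding torus_periodic_def by auto
      have D: "((\<lambda>\<epsilon>. action b0 b1 dt dx L (\<lambda>p. u p + \<epsilon> *\<^sub>R v p)) has_real_derivative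
          integral B (\<lambda>p. E p (v p))) (at 0)"
        using deriv[OF cv] unfolding splitI[OF cv vp0 vp1] .
      show ?thesis
      proof
        assume D0: "((\<lambda>\<epsilon>. action b0 b1 dt dx L (\<lambda>p. u p + \<epsilon> *\<^sub>R v p)) has_real_derivative 0) (at 0)"
        show "integral B (\<lambda>p. E p (v p)) = 0" using DERIV_unique[OF D D0] .
      next
        assume "integral B (\<lambda>p. E p (v p)) = 0"
        then show "((\<lambda>\<epsilon>. action b0 b1 dt dx L (\<lambda>p. u p + \<epsilon> *\<^sub>R v p)) has_real_derivative 0) (at 0)"
          using D by simp
      qed
    qed
    then show ?thesis unfolding stationary_def by blast
  qed
  have rhs_iff: "(\<forall>t x. \<forall>h :: real^'d.
        L' (u (t, x), u (t + dt, x), u (t, x + dx)) (h, 0, 0)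
      + L' (u (t - dt, x), u (t, x), u (t - dt, x + dx)) (0, h, 0)
      + L' (u (t, x - dx), u (t + dt, x - dx), u (t, x)) (0, 0, h) = 0) \<longleftrightarrow> (\<forall>t x h. E (t, x) h = 0)"
    by (simp add: E_def U_def)
  have key: "(\<forall>v. C1_map v \<and> torus_periodic b0 b1 v \<longrightarrow> integral B (\<lambda>p. E p (v p)) = 0)
      \<longleftrightarrow> (\<forall>t x h. E (t, x) h = 0)"
  proof
    assume R: "\<forall>t x h. E (t, x) h = 0"
    have R': "E p h = 0" for p h using R by (cases p) auto
    show "\<forall>v. C1_map v \<and> torus_periodic b0 b1 v \<longrightarrow> integral B (\<lambda>p. E p (v p)) = 0"
      by (simp add: R')
  next
    assume H: "\<forall>v. C1_map v \<and> torus_periodic b0 b1 v \<longrightarrow> integral B (\<lambda>p. E p (v p)) = 0"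
    show "\<forall>t x h. E (t, x) h = 0"
    proof (rule ccontr)
      assume "\<not> (\<forall>t x h. E (t, x) h = 0)"
      then obtain t0 x0 h0 where h0: "E (t0, x0) h0 \<noteq> 0" by blast
      define p0 where "p0 = (t0, x0)"
      define h where "h = (if E p0 h0 > 0 then h0 else - h0)"
      have hpos: "E p0 h > 0"
      proof (cases "E p0 h0 > 0")
        case True then show ?thesis by (simp add: h_def)
      next
        case False
        have "E p0 ((-1) *\<^sub>R h0) = - E p0 h0" by (simp only: Elin)
        then show ?thesis using False h0 by (simp add: h_def p0_def)
      qed
      define e where "e p = E p h" for p
      have ce: "continuous_on UNIV e" unfolding e_def by (rule cE) (rule continuous_on_const)
      have e0: "e (t + b0, x) = e (t, x)" "e (t, x + b1) = e (t, x)" for t x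
        unfolding e_def by (simp_all add: Eper0 Eper1)
      have eper: "e (t + of_int j * b0, x + of_int m * b1) = e (t, x)" for t x j m
      proof -
        have "e (t + of_int j * b0, x + of_int m * b1) = e (t, x + of_int m * b1)"
          by (rule per_int[where g="\<lambda>t. e (t, x + of_int m * b1)"]) (rule e0(1))
        also have "\<dots> = e (t, x)"
          by (rule per_int[where g="\<lambda>x. e (t, x)"]) (rule e0(2))
        finally show ?thesis .
      qed
      obtain r where r: "r > 0" and rpos: "\<And>p. dist p p0 < r \<Longrightarrow> e p > 0"
      proof -
        from ce[unfolded continuous_on_iff] hpos obtain d where d: "d > 0"
          "\<forall>x'\<in>UNIV. dist x' p0 < d \<longrightarrow> dist (e x') (e p0) < e p0"
          unfolding e_def by (metis UNIV_I)
        show ?thesis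
        proof (rule that[OF d(1)])
          fix p assume "dist p p0 < d"
          with d(2) have "dist (e p) (e p0) < e p0" by blast
          then show "e p > 0" by (simp add: dist_real_def abs_if split: if_splits)
        qed
      qed
      define \<theta>0 where "\<theta>0 = min pi (pi * r / b0)"
      define \<theta>1 where "\<theta>1 = min pi (pi * r / b1)"
      have th0: "0 < \<theta>0" "\<theta>0 \<le> pi" "\<theta>0 * b0 / (2*pi) \<le> r / 2"
      proof -
        show "0 < \<theta>0" "\<theta>0 \<le> pi" unfolding \<theta>0_def using r b0 by auto
        have "\<theta>0 * b0 \<le> pi * r" unfolding \<theta>0_def using b0 r
          by (metis min.cobounded2 mult.commute pos_le_divide_eq mult_le_cancel_left_pos)
        then show "\<theta>0 * b0 / (2*pi) \<le> r / 2" by (simp add: field_simps)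
      qed
      have th1: "0 < \<theta>1" "\<theta>1 \<le> pi" "\<theta>1 * b1 / (2*pi) \<le> r / 2"
      proof -
        show "0 < \<theta>1" "\<theta>1 \<le> pi" unfolding \<theta>1_def using r b1 by auto
        have "\<theta>1 * b1 \<le> pi * r" unfolding \<theta>1_def using b1 r
          by (metis min.cobounded2 mult.commute pos_le_divide_eq mult_le_cancel_left_pos)
        then show "\<theta>1 * b1 / (2*pi) \<le> r / 2" by (simp add: field_simps)
      qed
      define k0 where "k0 = cos \<theta>0"
      define k1 where "k1 = cos \<theta>1"
      define \<phi> where "\<phi> p = bump b0 t0 k0 (fst p) * bump b1 x0 k1 (snd p)" for p
      define v where "v p = \<phi> p *\<^sub>R h" for p
      have C1v: "C1_map v"
        unfolding v_def
      proof (rule C1_scal[where a="\<lambda>p. bump' b0 t0 k0 (fst p) * bump b1 x0 k1 (snd p)"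
            and c="\<lambda>p. bump b0 t0 k0 (fst p) * bump' b1 x0 k1 (snd p)"])
        show "(\<phi> has_derivative (\<lambda>k. fst k * (bump' b0 t0 k0 (fst p) * bump b1 x0 k1 (snd p))
            + snd k * (bump b0 t0 k0 (fst p) * bump' b1 x0 k1 (snd p)))) (at p)" for p
          unfolding \<phi>_def[abs_def] by (rule prod_deriv[OF DERIV_bump DERIV_bump])
        have f: "continuous_on UNIV (\<lambda>p::real\<times>real. fst p)" "continuous_on UNIV (\<lambda>p::real\<times>real. snd p)"
          by (intro continuous_intros)+
        show "continuous_on UNIV (\<lambda>p. bump' b0 t0 k0 (fst p) * bump b1 x0 k1 (snd p))"
          using continuous_on_compose2[OF cont_bump' f(1)] continuous_on_compose2[OF cont_bump f(2)]
          by (intro continuous_intros) auto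
        show "continuous_on UNIV (\<lambda>p. bump b0 t0 k0 (fst p) * bump' b1 x0 k1 (snd p))"
          using continuous_on_compose2[OF cont_bump f(1)] continuous_on_compose2[OF cont_bump' f(2)]
          by (intro continuous_intros) auto
      qed
      have perv: "torus_periodic b0 b1 v"
        unfolding torus_periodic_def v_def \<phi>_def using bump_per[OF b0] bump_per[OF b1] by simp
      have I0: "integral B (\<lambda>p. E p (v p)) = 0" using H C1v perv by blast
      define F where "F p = \<phi> p * e p" for p
      have EF: "(\<lambda>p. E p (v p)) = F" by (rule ext) (simp add: v_def F_def e_def Elin)
      have cphi: "continuous_on UNIV \<phi>"
      proof -
        have f: "continuous_on UNIV (\<lambda>p::real\<times>real. fst p)" "continuous_on UNIV (\<lambda>p::real\<times>real. snd p)"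
          by (intro continuous_intros)+
        show ?thesis unfolding \<phi>_def[abs_def]
          using continuous_on_compose2[OF cont_bump f(1)] continuous_on_compose2[OF cont_bump f(2)]
          by (intro continuous_intros) auto
      qed
      have cF: "continuous_on UNIV F" unfolding F_def[abs_def] by (intro continuous_intros cphi ce)
      have Fnn: "F p \<ge> 0" for p
      proof (cases "\<phi> p = 0")
        case True then show ?thesis by (simp add: F_def)
      next
        case False
        obtain t x where p: "p = (t, x)" by (cases p)
        have bt: "bump b0 t0 k0 t > 0" and bx: "bump b1 x0 k1 x > 0"
          using False bump_nonneg[of b0 t0 k0 t] bump_nonneg[of b1 x0 k1 x]
          unfolding \<phi>_def p by (auto simp: less_le)
        obtain j :: int where j: "\<bar>t - of_int j * b0 - t0\<bar> < \<theta>0 * b0 / (2*pi)"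
          using bump_supp[OF b0 th0(1,2)] bt unfolding k0_def by blast
        obtain m :: int where m: "\<bar>x - of_int m * b1 - x0\<bar> < \<theta>1 * b1 / (2*pi)"
          using bump_supp[OF b1 th1(1,2)] bx unfolding k1_def by blast
        have "dist (t - of_int j * b0, x - of_int m * b1) p0
            = sqrt ((t - of_int j * b0 - t0)^2 + (x - of_int m * b1 - x0)^2)"
          by (simp add: p0_def dist_Pair_Pair dist_real_def)
        also have "\<dots> \<le> \<bar>t - of_int j * b0 - t0\<bar> + \<bar>x - of_int m * b1 - x0\<bar>"
          by (rule sqrt_sum_squares_le_sum_abs)
        also have "\<dots> < r" using j m th0(3) th1(3) by linarith
        finally have "e (t - of_int j * b0, x - of_int m * b1) > 0" by (rule rpos)
        moreover have "e (t - of_int j * b0, x - of_int m * b1) = e (t, x)"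
          using eper[of "t - of_int j * b0" j "x - of_int m * b1" m] by simp
        ultimately have "e p > 0" using p by simp
        moreover have "\<phi> p \<ge> 0" unfolding \<phi>_def using bump_nonneg by simp
        ultimately show ?thesis by (simp add: F_def)
      qed
      define ps where "ps = (t0 + of_int (- \<lfloor>t0/b0\<rfloor>) * b0, x0 + of_int (- \<lfloor>x0/b1\<rfloor>) * b1)"
      have psB: "ps \<in> cbox (0,0) (b0,b1)"
        using floor_divide_lower[OF b0, of t0] floor_divide_upper[OF b0, of t0]
          floor_divide_lower[OF b1, of x0] floor_divide_upper[OF b1, of x0]
        unfolding ps_def by (auto simp: cbox_Pair_eq algebra_simps)
      have k0l: "k0 < 1" unfolding k0_def using th0 cos_mono_less_eq[of \<theta>0 0] by simp
      have k1l: "k1 < 1" unfolding k1_def using th1 cos_mono_less_eq[of \<theta>1 0] by simp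
      have Fps: "F ps > 0"
      proof -
        have a: "bump b0 t0 k0 (t0 + of_int (- \<lfloor>t0/b0\<rfloor>) * b0) > 0" by (rule bump_center[OF b0 k0l])
        have b: "bump b1 x0 k1 (x0 + of_int (- \<lfloor>x0/b1\<rfloor>) * b1) > 0" by (rule bump_center[OF b1 k1l])
        have "\<phi> ps > 0" unfolding \<phi>_def ps_def fst_conv snd_conv by (rule mult_pos_pos[OF a b])
        moreover have "e ps = e p0" unfolding ps_def p0_def by (rule eper)
        ultimately show ?thesis using hpos unfolding F_def e_def by (simp add: mult_pos_pos)
      qed
      have intF: "(F has_integral 0) (cbox (0,0) (b0,b1))"
      proof -
        have "F integrable_on cbox (0,0) (b0,b1)"
          by (rule integrable_continuous, rule continuous_on_subset[OF cF]) auto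
        moreover have "integral (cbox (0,0) (b0,b1)) F = 0" using I0 EF B_def by simp
        ultimately show ?thesis by (metis has_integral_integral)
      qed
      have "box (0::real, 0::real) (b0, b1) \<noteq> {}"
        using b0 b1 by (simp add: box_ne_empty Basis_prod_def)
      from has_integral_0_cbox_imp_0[OF continuous_on_subset[OF cF subset_UNIV] _ intF this psB] Fnn
      have "F ps = 0" by blast
      then show False using Fps by simp
    qed
  qed
  show ?thesis using stat_iff key rhs_iff by simp
qed

end
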